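(* Assume all $\lambda_k>0$ and $\mu_k>0$, and let $\bar X=(\bar X_{i,k})$ have the stationary distribution of the two-layer loss system with parameters $(m,n,\lambda,\mu)$. Then for each class $k$: $\mathrm{Erl}(m_k,\lambda_k/\mu_k)\le_{\mathrm{st}}\bar X_{1,k}+\bar X_{2,k}\le_{\mathrm{st}}\mathrm{Erl}(m_k+n,\lambda_k/\mu_k)$. Consequently, with $a_k=\mathbb{E}(\bar X_{1,k}+\bar X_{2,k})$, $\theta_k=\mu_k a_k$ and $b_k=P(\bar X\in B_k)$: $a_{\mathrm{Erl}}(m_k,\lambda_k/\mu_k)\le a_k\le a_{\mathrm{Erl}}(m_k+n,\lambda_k/\mu_k)$, $\mu_k a_{\mathrm{Erl}}(m_k,\lambda_k/\mu_k)\le\theta_k\le\mu_k a_{\mathrm{Erl}}(m_k+n,\lambda_k/\mu_k)$, $b_{\mathrm{Erl}}(m_k+n,\lambda_k/\mu_k)\le b_k\le b_{\mathrm{Erl}}(m_k,\lambda_k/\mu_k)$.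
   Context: Two-layer loss system with parameters $(m,n,\lambda,\mu)$: Markov process on $S=\{x\in\mathbb{Z}_+^K\times\mathbb{Z}_+^K:x_{1,k}\le m_k\ \forall k,\ \sum_kx_{2,k}\le n\}$ ($x_{i,k}$ = number of class-$k$ customers at layer $i$) with transitions $x\mapsto x+e_{1,k}$ at rate $\lambda_k1(x_{1,k}<m_k)$, $x\mapsto x+e_{2,k}$ at rate $\lambda_k1(x_{1,k}=m_k,\sum_lx_{2,l}<n)$, $x\mapsto x-e_{i,k}$ at rate $\mu_kx_{i,k}$. $B_k=\{x\in S:x_{1,k}=m_k,\ \sum_lx_{2,l}=n\}$ is the set of states where class-$k$ arrivals are rejected, so $b_k$ is the class-$k$ blocking probability and $\theta_k$ the mean class-$k$ throughput (satisfying $\lambda_k(1-b_k)=\theta_k$). $\mathrm{Erl}(s,\rho)$ denotes a random variable on $\{0,\dots,s\}$ with $P(\mathrm{Erl}(s,\rho)=i)=\frac{\rho^i/i!}{\sum_{j=0}^s\rho^j/j!}$; $a_{\mathrm{Erl}}(s,\rho)$ is its mean and $b_{\mathrm{Erl}}(s,\rho)=P(\mathrm{Erl}(s,\rho)=s)$ (Erlang B formula). $\le_{\mathrm{st}}$ between real random variables is the usual stochastic order. *)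

theory Defs
  imports "HOL-Probability.Probability"
begin

text \<open>Classes are indexed by a finite type 'k. A state is a pair (x1, x2) of
  class-indexed counts: x1 k = customers of class k at layer 1, x2 k at layer 2.\<close>

type_synonym 'k state = "('k \<Rightarrow> nat) \<times> ('k \<Rightarrow> nat)"

definition tl_space :: "('k::finite \<Rightarrow> nat) \<Rightarrow> nat \<Rightarrow> 'k state set" where
  "tl_space m n = {x. (\<forall>k. fst x k \<le> m k) \<and> (\<Sum>l\<in>UNIV. snd x l) \<le> n}"

definition tl_rate :: "('k::finite \<Rightarrow> nat) \<Rightarrow> nat \<Rightarrow> ('k \<Rightarrow> real) \<Rightarrow> ('k \<Rightarrow> real)
    \<Rightarrow> 'k state \<Rightarrow> 'k state \<Rightarrow> real" where
  "tl_rate m n lam mu x y = (\<Sum>k\<in>UNIV.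
      (if fst x k < m k \<and> y = ((fst x)(k := fst x k + 1), snd x) then lam k else 0)
    + (if fst x k = m k \<and> (\<Sum>l\<in>UNIV. snd x l) < n \<and> y = (fst x, (snd x)(k := snd x k + 1))
       then lam k else 0)
    + (if 0 < fst x k \<and> y = ((fst x)(k := fst x k - 1), snd x) then mu k * real (fst x k) else 0)
    + (if 0 < snd x k \<and> y = (fst x, (snd x)(k := snd x k - 1)) then mu k * real (snd x k) else 0))"

definition tl_stationary :: "('k::finite \<Rightarrow> nat) \<Rightarrow> nat \<Rightarrow> ('k \<Rightarrow> real) \<Rightarrow> ('k \<Rightarrow> real)
    \<Rightarrow> 'k state pmf \<Rightarrow> bool" where
  "tl_stationary m n lam mu p \<longleftrightarrow> set_pmf p \<subseteq> tl_space m n \<and>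
     (\<forall>y\<in>tl_space m n. pmf p y * (\<Sum>z\<in>tl_space m n. tl_rate m n lam mu y z)
        = (\<Sum>x\<in>tl_space m n. pmf p x * tl_rate m n lam mu x y))"

definition tl_block :: "('k::finite \<Rightarrow> nat) \<Rightarrow> nat \<Rightarrow> 'k \<Rightarrow> 'k state set" where
  "tl_block m n k = {x \<in> tl_space m n. fst x k = m k \<and> (\<Sum>l\<in>UNIV. snd x l) = n}"

definition erl_pmf :: "nat \<Rightarrow> real \<Rightarrow> nat pmf" where
  "erl_pmf s rho = embed_pmf (\<lambda>i. if i \<le> s
      then (rho ^ i / fact i) / (\<Sum>j\<le>s. rho ^ j / fact j) else 0)"

definition a_erl :: "nat \<Rightarrow> real \<Rightarrow> real" where
  "a_erl s rho = measure_pmf.expectation (erl_pmf s rho) real"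

definition b_erl :: "nat \<Rightarrow> real \<Rightarrow> real" where
  "b_erl s rho = pmf (erl_pmf s rho) s"

definition st_le :: "real pmf \<Rightarrow> real pmf \<Rightarrow> bool" where
  "st_le p q \<longleftrightarrow> (\<forall>t. measure_pmf.prob p {t<..} \<le> measure_pmf.prob q {t<..})"

end

theory Submission
  imports Defs
begin


lemma erl_pmf_eq:
  assumes "rho > 0"
  shows "pmf (erl_pmf s rho) i = (if i \<le> s then (rho ^ i / fact i) / (\<Sum>j\<le>s. rho ^ j / fact j) else 0)"
proof -
  let ?E = "(\<Sum>j\<le>s. rho ^ j / fact j)"
  have Epos: "?E > 0"
    by (rule sum_pos2[where i=0]) (use assms in auto)
  let ?f = "\<lambda>i. if i \<le> s then (rho ^ i / fact i) / ?E else 0"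
  have nn: "\<And>i. 0 \<le> ?f i" using assms Epos by auto
  have "(\<integral>\<^sup>+x. ennreal (?f x) \<partial>count_space UNIV) = (\<Sum>x\<in>{..s}. ennreal (?f x))"
    by (subst nn_integral_count_space'[of "{..s}"]) auto
  also have "\<dots> = ennreal (\<Sum>x\<in>{..s}. ?f x)"
    by (rule sum_ennreal) (rule nn)
  also have "(\<Sum>x\<in>{..s}. ?f x) = (\<Sum>x\<in>{..s}. (rho ^ x / fact x) / ?E)"
    by (rule sum.cong) auto
  also have "\<dots> = ?E / ?E" by (rule sum_divide_distrib[symmetric])
  also have "\<dots> = 1" using Epos by simp
  finally have "(\<integral>\<^sup>+x. ennreal (?f x) \<partial>count_space UNIV) = 1" by simp
  then show ?thesis unfolding erl_pmf_def
    using nn by (subst pmf_embed_pmf) auto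
qed




lemma finite_bounded_funs: "finite {f :: 'k::finite \<Rightarrow> nat. \<forall>k. f k \<le> c k}"
proof -
  have "{f :: 'k \<Rightarrow> nat. \<forall>k. f k \<le> c k} = Pi\<^sub>E UNIV (\<lambda>k. {..c k})"
    by (auto simp: PiE_UNIV_domain Pi_def)
  then show ?thesis by (simp add: finite_PiE)
qed

lemma finite_space: "finite (tl_space (m::'k::finite\<Rightarrow>nat) n)"
proof (rule finite_subset)
  show "tl_space m n \<subseteq> {f. \<forall>k. f k \<le> m k} \<times> {f::'k\<Rightarrow>nat. \<forall>k. f k \<le> (\<lambda>_. n) k}"
  proof
    fix x assume x: "x \<in> tl_space m n"
    have "snd x l \<le> n" for l
    proof -
      have "snd x l \<le> (\<Sum>l\<in>UNIV. snd x l)" by (rule member_le_sum) auto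
      then show ?thesis using x unfolding tl_space_def by auto
    qed
    then show "x \<in> {f. \<forall>k. f k \<le> m k} \<times> {f::'k\<Rightarrow>nat. \<forall>k. f k \<le> (\<lambda>_. n) k}"
      using x unfolding tl_space_def by (cases x) auto
  qed
  show "finite ({f. \<forall>k. f k \<le> m k} \<times> {f::'k\<Rightarrow>nat. \<forall>k. f k \<le> (\<lambda>_. n) k})"
    using finite_bounded_funs[of m] finite_bounded_funs[where c="(\<lambda>_. n) :: 'k \<Rightarrow> nat"]
    by (intro finite_cartesian_product) auto
qed

lemma sum_upd: "(\<Sum>l\<in>UNIV. ((f::'k::finite\<Rightarrow>nat)(j := v)) l) + f j = (\<Sum>l\<in>UNIV. f l) + (v::nat)"
proof -
  have a: "(\<Sum>l\<in>UNIV. (f(j := v)) l) = v + (\<Sum>l\<in>UNIV-{j}. (f(j := v)) l)"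
    by (subst sum.remove[of _ j]) auto
  have b: "(\<Sum>l\<in>UNIV. f l) = f j + (\<Sum>l\<in>UNIV-{j}. f l)"
    by (subst sum.remove[of _ j]) auto
  have c: "(\<Sum>l\<in>UNIV-{j}. (f(j := v)) l) = (\<Sum>l\<in>UNIV-{j}. f l)"
    by (rule sum.cong) auto
  show ?thesis using a b c by simp
qed

lemma sum_if_eq:
  assumes "finite S" "P \<Longrightarrow> t \<in> S"
  shows "(\<Sum>y\<in>S. (if P \<and> y = t then c else 0) * f y) = (if P then c * (f t :: real) else 0)"
proof (cases P)
  case True
  have "(\<Sum>y\<in>S. (if P \<and> y = t then c else 0) * f y) = (\<Sum>y\<in>S. if y = t then c * f t else 0)"
    by (rule sum.cong) (auto simp: True)
  also have "\<dots> = c * f t" using assms True by simp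
  finally show ?thesis using True by simp
qed simp

lemma generator:
  fixes g :: "'k::finite state \<Rightarrow> real"
  assumes st: "tl_stationary m n lam mu p"
  shows "(\<Sum>x\<in>tl_space m n. pmf p x * (\<Sum>y\<in>tl_space m n. tl_rate m n lam mu x y * (g y - g x))) = 0"
proof -
  let ?S = "tl_space m n" and ?q = "tl_rate m n lam mu"
  have bal: "\<And>y. y \<in> ?S \<Longrightarrow> pmf p y * (\<Sum>z\<in>?S. ?q y z) = (\<Sum>x\<in>?S. pmf p x * ?q x y)"
    using st unfolding tl_stationary_def by auto
  have "(\<Sum>x\<in>?S. pmf p x * (\<Sum>y\<in>?S. ?q x y * (g y - g x)))
      = (\<Sum>x\<in>?S. \<Sum>y\<in>?S. pmf p x * ?q x y * g y) - (\<Sum>x\<in>?S. g x * (pmf p x * (\<Sum>y\<in>?S. ?q x y)))"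
    by (simp add: sum_distrib_left sum_subtractf algebra_simps flip: sum.distrib)
  also have "(\<Sum>x\<in>?S. \<Sum>y\<in>?S. pmf p x * ?q x y * g y) = (\<Sum>y\<in>?S. g y * (\<Sum>x\<in>?S. pmf p x * ?q x y))"
    by (subst sum.swap) (simp add: sum_distrib_left algebra_simps)
  also have "\<dots> = (\<Sum>y\<in>?S. g y * (pmf p y * (\<Sum>z\<in>?S. ?q y z)))"
    using bal by (intro sum.cong) auto
  finally show ?thesis by simp
qed




lemma drift:
  fixes g :: "'k::finite state \<Rightarrow> real"
  assumes x: "x \<in> tl_space m n"
  shows "(\<Sum>y\<in>tl_space m n. tl_rate m n lam mu x y * (g y - g x)) =
   (\<Sum>j\<in>UNIV. (if fst x j < m j then lam j * (g ((fst x)(j := fst x j + 1), snd x) - g x) else 0)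
     + (if fst x j = m j \<and> (\<Sum>l\<in>UNIV. snd x l) < n then lam j * (g (fst x, (snd x)(j := snd x j + 1)) - g x) else 0)
     + (if 0 < fst x j then mu j * real (fst x j) * (g ((fst x)(j := fst x j - 1), snd x) - g x) else 0)
     + (if 0 < snd x j then mu j * real (snd x j) * (g (fst x, (snd x)(j := snd x j - 1)) - g x) else 0))" (is "_ = ?rhs")
proof -
  let ?S = "tl_space m n"
  have fin: "finite ?S" by (rule finite_space)
  have xm: "\<forall>k. fst x k \<le> m k" and xn: "(\<Sum>l\<in>UNIV. snd x l) \<le> n"
    using x unfolding tl_space_def by auto
  have m1: "((fst x)(j := fst x j + 1), snd x) \<in> ?S" if "fst x j < m j" for j
    using xm xn that unfolding tl_space_def by auto
  have m2: "(fst x, (snd x)(j := snd x j + 1)) \<in> ?S" if "fst x j = m j \<and> (\<Sum>l\<in>UNIV. snd x l) < n" for j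
    using xm xn that sum_upd[of "snd x" j "snd x j + 1"] unfolding tl_space_def by auto
  have m3: "((fst x)(j := fst x j - 1), snd x) \<in> ?S" if "0 < fst x j" for j
    using xm xn unfolding tl_space_def by (auto simp: fun_upd_def intro: le_trans[OF diff_le_self])
  have m4: "(fst x, (snd x)(j := snd x j - 1)) \<in> ?S" if "0 < snd x j" for j
    using xm xn that sum_upd[of "snd x" j "snd x j - 1"] unfolding tl_space_def by auto
  have "(\<Sum>y\<in>?S. tl_rate m n lam mu x y * (g y - g x)) =
     (\<Sum>j\<in>UNIV. \<Sum>y\<in>?S.
        (if fst x j < m j \<and> y = ((fst x)(j := fst x j + 1), snd x) then lam j else 0) * (g y - g x)
      + (if fst x j = m j \<and> (\<Sum>l\<in>UNIV. snd x l) < n \<and> y = (fst x, (snd x)(j := snd x j + 1))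
         then lam j else 0) * (g y - g x)
      + (if 0 < fst x j \<and> y = ((fst x)(j := fst x j - 1), snd x) then mu j * real (fst x j) else 0) * (g y - g x)
      + (if 0 < snd x j \<and> y = (fst x, (snd x)(j := snd x j - 1)) then mu j * real (snd x j) else 0) * (g y - g x))"
    unfolding tl_rate_def
    by (subst sum.swap) (simp add: sum_distrib_right distrib_right)
  also have "\<dots> = ?rhs"
  proof (rule sum.cong[OF refl])
    fix j
    have s1: "(\<Sum>y\<in>?S. (if fst x j < m j \<and> y = ((fst x)(j := fst x j + 1), snd x) then lam j else 0) * (g y - g x))
      = (if fst x j < m j then lam j * (g ((fst x)(j := fst x j + 1), snd x) - g x) else 0)"
      by (rule sum_if_eq[OF fin m1])
    have s2: "(\<Sum>y\<in>?S. (if fst x j = m j \<and> (\<Sum>l\<in>UNIV. snd x l) < n \<and> y = (fst x, (snd x)(j := snd x j + 1))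
         then lam j else 0) * (g y - g x)) = (if fst x j = m j \<and> (\<Sum>l\<in>UNIV. snd x l) < n then lam j * (g (fst x, (snd x)(j := snd x j + 1)) - g x) else 0)"
      using sum_if_eq[OF fin, where P="fst x j = m j \<and> (\<Sum>l\<in>UNIV. snd x l) < n" and t="(fst x, (snd x)(j := snd x j + 1))" and c="lam j" and f="\<lambda>y. g y - g x"] m2[of j] by (simp add: conj_assoc)
    have s3: "(\<Sum>y\<in>?S. (if 0 < fst x j \<and> y = ((fst x)(j := fst x j - 1), snd x) then mu j * real (fst x j) else 0) * (g y - g x))
      = (if 0 < fst x j then mu j * real (fst x j) * (g ((fst x)(j := fst x j - 1), snd x) - g x) else 0)"
      by (rule sum_if_eq[OF fin m3])
    have s4: "(\<Sum>y\<in>?S. (if 0 < snd x j \<and> y = (fst x, (snd x)(j := snd x j - 1)) then mu j * real (snd x j) else 0) * (g y - g x))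
      = (if 0 < snd x j then mu j * real (snd x j) * (g (fst x, (snd x)(j := snd x j - 1)) - g x) else 0)"
      by (rule sum_if_eq[OF fin m4])
    show "(\<Sum>y\<in>?S.
        (if fst x j < m j \<and> y = ((fst x)(j := fst x j + 1), snd x) then lam j else 0) * (g y - g x)
      + (if fst x j = m j \<and> (\<Sum>l\<in>UNIV. snd x l) < n \<and> y = (fst x, (snd x)(j := snd x j + 1))
         then lam j else 0) * (g y - g x)
      + (if 0 < fst x j \<and> y = ((fst x)(j := fst x j - 1), snd x) then mu j * real (fst x j) else 0) * (g y - g x)
      + (if 0 < snd x j \<and> y = (fst x, (snd x)(j := snd x j - 1)) then mu j * real (snd x j) else 0) * (g y - g x))
      = (if fst x j < m j then lam j * (g ((fst x)(j := fst x j + 1), snd x) - g x) else 0)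
     + (if fst x j = m j \<and> (\<Sum>l\<in>UNIV. snd x l) < n then lam j * (g (fst x, (snd x)(j := snd x j + 1)) - g x) else 0)
     + (if 0 < fst x j then mu j * real (fst x j) * (g ((fst x)(j := fst x j - 1), snd x) - g x) else 0)
     + (if 0 < snd x j then mu j * real (snd x j) * (g (fst x, (snd x)(j := snd x j - 1)) - g x) else 0)"
      unfolding sum.distrib s1 s2 s3 s4 ..
  qed
  finally show ?thesis .
qed




lemma drift_Z:
  fixes h :: "nat \<Rightarrow> real" and k :: "'k::finite"
  assumes x: "x \<in> tl_space m n"
  shows "(\<Sum>y\<in>tl_space m n. tl_rate m n lam mu x y * (h (fst y k + snd y k) - h (fst x k + snd x k))) =
    (if fst x k < m k \<or> (fst x k = m k \<and> (\<Sum>l\<in>UNIV. snd x l) < n)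
      then lam k * (h (fst x k + snd x k + 1) - h (fst x k + snd x k)) else 0)
    + mu k * real (fst x k + snd x k) * (h (fst x k + snd x k - 1) - h (fst x k + snd x k))"
proof -
  define F where "F j = (if fst x j < m j then lam j * (h (((fst x)(j := fst x j + 1)) k + snd x k) - h (fst x k + snd x k)) else 0)
     + (if fst x j = m j \<and> (\<Sum>l\<in>UNIV. snd x l) < n then lam j * (h (fst x k + ((snd x)(j := snd x j + 1)) k) - h (fst x k + snd x k)) else 0)
     + (if 0 < fst x j then mu j * real (fst x j) * (h (((fst x)(j := fst x j - 1)) k + snd x k) - h (fst x k + snd x k)) else 0)
     + (if 0 < snd x j then mu j * real (snd x j) * (h (fst x k + ((snd x)(j := snd x j - 1)) k) - h (fst x k + snd x k)) else 0)" for j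
  have "(\<Sum>y\<in>tl_space m n. tl_rate m n lam mu x y * (h (fst y k + snd y k) - h (fst x k + snd x k))) = (\<Sum>j\<in>UNIV. F j)"
    unfolding drift[OF x, where g="\<lambda>y. h (fst y k + snd y k)"] F_def by (simp only: fst_conv snd_conv)
  also have "\<dots> = F k + (\<Sum>j\<in>UNIV-{k}. F j)"
    by (subst sum.remove[of _ k]) auto
  also have "(\<Sum>j\<in>UNIV-{k}. F j) = 0"
    by (rule sum.neutral) (auto simp: F_def)
  also have "F k = (if fst x k < m k \<or> (fst x k = m k \<and> (\<Sum>l\<in>UNIV. snd x l) < n)
      then lam k * (h (fst x k + snd x k + 1) - h (fst x k + snd x k)) else 0)
    + mu k * real (fst x k + snd x k) * (h (fst x k + snd x k - 1) - h (fst x k + snd x k))"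
  proof -
    have a: "(if fst x k < m k then lam k * (h (fst x k + 1 + snd x k) - h (fst x k + snd x k)) else 0)
     + (if fst x k = m k \<and> (\<Sum>l\<in>UNIV. snd x l) < n then lam k * (h (fst x k + (snd x k + 1)) - h (fst x k + snd x k)) else 0)
      = (if fst x k < m k \<or> (fst x k = m k \<and> (\<Sum>l\<in>UNIV. snd x l) < n)
      then lam k * (h (fst x k + snd x k + 1) - h (fst x k + snd x k)) else 0)"
      by (auto simp: ac_simps)
    have b: "(if 0 < fst x k then mu k * real (fst x k) * (h (fst x k - 1 + snd x k) - h (fst x k + snd x k)) else 0)
     + (if 0 < snd x k then mu k * real (snd x k) * (h (fst x k + (snd x k - 1)) - h (fst x k + snd x k)) else 0)
     = mu k * real (fst x k + snd x k) * (h (fst x k + snd x k - 1) - h (fst x k + snd x k))"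
      by (cases "fst x k"; cases "snd x k") (auto simp: algebra_simps)
    show ?thesis using a b unfolding F_def fun_upd_same by linarith
  qed
  finally show ?thesis by simp
qed




definition Zk :: "'k \<Rightarrow> 'k state \<Rightarrow> nat" where "Zk k x = fst x k + snd x k"
definition accp :: "('k::finite \<Rightarrow> nat) \<Rightarrow> nat \<Rightarrow> 'k \<Rightarrow> 'k state \<Rightarrow> bool" where
  "accp m n k x = (fst x k < m k \<or> (fst x k = m k \<and> (\<Sum>l\<in>UNIV. snd x l) < n))"

lemma key:
  assumes st: "tl_stationary m n lam mu p"
  shows "(\<Sum>x\<in>tl_space m n. pmf p x * ((if accp m n k x then lam k * (h (Zk k x + 1) - h (Zk k x)) else 0)
     + mu k * real (Zk k x) * (h (Zk k x - 1) - h (Zk k x)))) = 0"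
proof -
  have "(\<Sum>x\<in>tl_space m n. pmf p x * ((if accp m n k x then lam k * (h (Zk k x + 1) - h (Zk k x)) else 0)
     + mu k * real (Zk k x) * (h (Zk k x - 1) - h (Zk k x))))
    = (\<Sum>x\<in>tl_space m n. pmf p x * (\<Sum>y\<in>tl_space m n. tl_rate m n lam mu x y * (h (Zk k y) - h (Zk k x))))"
    by (rule sum.cong[OF refl]) (simp add: drift_Z Zk_def accp_def)
  also have "\<dots> = 0" by (rule generator[OF st])
  finally show ?thesis .
qed

lemma Zk_le: "x \<in> tl_space m n \<Longrightarrow> Zk k x \<le> m k + n"
proof -
  assume x: "x \<in> tl_space m n"
  have "snd x k \<le> (\<Sum>l\<in>UNIV. snd x l)" by (rule member_le_sum) auto
  moreover have "fst x k \<le> m k" "(\<Sum>l\<in>UNIV. snd x l) \<le> n" using x unfolding tl_space_def by auto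
  ultimately show ?thesis unfolding Zk_def by linarith
qed

lemma group_Z:
  fixes F :: "nat \<Rightarrow> real"
  shows "(\<Sum>x\<in>tl_space m n. pmf p x * F (Zk k x))
     = (\<Sum>z\<le>m k + n. F z * (\<Sum>x\<in>tl_space m n. if Zk k x = z then pmf p x else 0))"
proof -
  have "(\<Sum>x\<in>tl_space m n. pmf p x * F (Zk k x))
     = (\<Sum>x\<in>tl_space m n. \<Sum>z\<le>m k + n. if Zk k x = z then F z * pmf p x else 0)"
  proof (rule sum.cong[OF refl])
    fix x assume "x \<in> tl_space m n"
    then have "Zk k x \<le> m k + n" by (rule Zk_le)
    then show "pmf p x * F (Zk k x) = (\<Sum>z\<le>m k + n. if Zk k x = z then F z * pmf p x else 0)"
      by (simp add: mult.commute)
  qed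
  also have "\<dots> = (\<Sum>z\<le>m k + n. \<Sum>x\<in>tl_space m n. if Zk k x = z then F z * pmf p x else 0)"
    by (rule sum.swap)
  also have "\<dots> = (\<Sum>z\<le>m k + n. F z * (\<Sum>x\<in>tl_space m n. if Zk k x = z then pmf p x else 0))"
    by (simp add: sum_distrib_left if_distrib cong: if_cong)
  finally show ?thesis .
qed




lemma cut_eq:
  assumes st: "tl_stationary m n lam mu p"
  shows "lam k * (\<Sum>x\<in>tl_space m n. if accp m n k x \<and> Zk k x = zc then pmf p x else 0)
    = mu k * real (zc + 1) * (\<Sum>x\<in>tl_space m n. if Zk k x = zc + 1 then pmf p x else 0)"
proof -
  let ?h = "\<lambda>z. if z \<le> zc then 1 else (0::real)"
  have pw: "pmf p x * ((if accp m n k x then lam k * (?h (Zk k x + 1) - ?h (Zk k x)) else 0)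
     + mu k * real (Zk k x) * (?h (Zk k x - 1) - ?h (Zk k x)))
    = (if Zk k x = zc + 1 then mu k * real (zc + 1) * pmf p x else 0)
      - (if accp m n k x \<and> Zk k x = zc then lam k * pmf p x else 0)" for x
    by (cases "Zk k x") (auto simp: algebra_simps)
  have "0 = (\<Sum>x\<in>tl_space m n. (if Zk k x = zc + 1 then mu k * real (zc + 1) * pmf p x else 0)
      - (if accp m n k x \<and> Zk k x = zc then lam k * pmf p x else 0))"
    using key[OF st, of k ?h] by (simp only: pw)
  also have "\<dots> = mu k * real (zc + 1) * (\<Sum>x\<in>tl_space m n. if Zk k x = zc + 1 then pmf p x else 0)
     - lam k * (\<Sum>x\<in>tl_space m n. if accp m n k x \<and> Zk k x = zc then pmf p x else 0)"
    unfolding sum_subtractf by (subst (1 2) sum_distrib_left) (intro arg_cong2[where f=minus] sum.cong; simp)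
  finally show ?thesis by simp
qed

lemma mean_eq:
  assumes st: "tl_stationary m n lam mu p"
  shows "lam k * (\<Sum>x\<in>tl_space m n. if accp m n k x then pmf p x else 0)
    = mu k * (\<Sum>x\<in>tl_space m n. pmf p x * real (Zk k x))"
proof -
  have pw: "pmf p x * ((if accp m n k x then lam k * (real (Zk k x + 1) - real (Zk k x)) else 0)
     + mu k * real (Zk k x) * (real (Zk k x - 1) - real (Zk k x)))
    = (if accp m n k x then lam k * pmf p x else 0) - mu k * (pmf p x * real (Zk k x))" for x
    by (cases "Zk k x") (auto simp: algebra_simps)
  have "0 = (\<Sum>x\<in>tl_space m n. (if accp m n k x then lam k * pmf p x else 0) - mu k * (pmf p x * real (Zk k x)))"
    using key[OF st, of k real] by (simp only: pw)
  also have "\<dots> = lam k * (\<Sum>x\<in>tl_space m n. if accp m n k x then pmf p x else 0)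
    - mu k * (\<Sum>x\<in>tl_space m n. pmf p x * real (Zk k x))"
    unfolding sum_subtractf by (subst (1 2) sum_distrib_left) (intro arg_cong2[where f=minus] sum.cong; simp)
  finally show ?thesis by simp
qed

lemma A_le: "(\<Sum>x\<in>tl_space m n. if accp m n k x \<and> Zk k x = zc then pmf p x else 0)
    \<le> (\<Sum>x\<in>tl_space m n. if Zk k x = zc then pmf p x else 0)"
  by (rule sum_mono) auto

lemma A_eq: "zc < m k \<Longrightarrow> (\<Sum>x\<in>tl_space m n. if accp m n k x \<and> Zk k x = zc then pmf p x else 0)
    = (\<Sum>x\<in>tl_space m n. if Zk k x = zc then pmf p x else 0)"
  by (rule sum.cong[OF refl]) (auto simp: accp_def Zk_def)




lemma lr_tail:
  fixes u v :: "nat \<Rightarrow> real"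
  assumes "(\<Sum>z\<le>N. u z) = 1" "(\<Sum>z\<le>N. v z) = 1"
    and pw: "\<And>a b. b < a \<Longrightarrow> a \<le> N \<Longrightarrow> u a * v b \<le> u b * v a"
  shows "(\<Sum>z\<le>N. if t < real z then u z else 0) \<le> (\<Sum>z\<le>N. if t < real z then v z else 0)"
proof -
  define U1 where "U1 = (\<Sum>z\<le>N. if t < real z then u z else 0)"
  define U0 where "U0 = (\<Sum>z\<le>N. if \<not> t < real z then u z else 0)"
  define V1 where "V1 = (\<Sum>z\<le>N. if t < real z then v z else 0)"
  define V0 where "V0 = (\<Sum>z\<le>N. if \<not> t < real z then v z else 0)"
  have U: "U1 + U0 = 1" unfolding U1_def U0_def assms(1)[symmetric] sum.distrib[symmetric]
    by (rule sum.cong) auto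
  have V: "V1 + V0 = 1" unfolding V1_def V0_def assms(2)[symmetric] sum.distrib[symmetric]
    by (rule sum.cong) auto
  have "U1 * V0 = (\<Sum>a\<le>N. \<Sum>b\<le>N. (if t < real a then u a else 0) * (if \<not> t < real b then v b else 0))"
    unfolding U1_def V0_def by (rule sum_product)
  also have "\<dots> \<le> (\<Sum>a\<le>N. \<Sum>b\<le>N. (if t < real a then v a else 0) * (if \<not> t < real b then u b else 0))"
  proof (intro sum_mono)
    fix a b assume a: "a \<in> {..N}" and b: "b \<in> {..N}"
    show "(if t < real a then u a else 0) * (if \<not> t < real b then v b else 0)
        \<le> (if t < real a then v a else 0) * (if \<not> t < real b then u b else 0)"
    proof (cases "t < real a \<and> \<not> t < real b")
      case True
      then have "b < a" by linarith
      with pw[of b a] a True show ?thesis by (simp add: mult.commute)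
    qed auto
  qed
  also have "\<dots> = V1 * U0"
    unfolding V1_def U0_def by (rule sum_product[symmetric])
  finally have "U1 * V0 \<le> V1 * U0" .
  moreover have "U0 = 1 - U1" "V0 = 1 - V1" using U V by linarith+
  ultimately have "U1 * (1 - V1) \<le> V1 * (1 - U1)" by simp
  then have "U1 - U1 * V1 \<le> V1 - U1 * V1" by (simp add: algebra_simps)
  then have "U1 \<le> V1" by linarith
  then show ?thesis unfolding U1_def V1_def .
qed

lemma tail_sum:
  fixes u :: "nat \<Rightarrow> real"
  shows "(\<Sum>z\<le>N. real z * u z) = (\<Sum>j\<in>{1..N}. \<Sum>z\<le>N. if real j - 1 < real z then u z else 0)"
proof -
  have "(\<Sum>j\<in>{1..N}. \<Sum>z\<le>N. if real j - 1 < real z then u z else 0)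
     = (\<Sum>z\<le>N. \<Sum>j\<in>{1..N}. if j \<le> z then u z else 0)"
    by (subst sum.swap) (intro sum.cong refl, auto)
  also have "\<dots> = (\<Sum>z\<le>N. real z * u z)"
  proof (rule sum.cong[OF refl])
    fix z assume "z \<in> {..N}"
    then have "{j\<in>{1..N}. j \<le> z} = {1..z}" by auto
    then have "(\<Sum>j\<in>{1..N}. if j \<le> z then u z else 0) = real (card {1..z}) * u z"
      by (simp add: sum.inter_filter[symmetric])
    then show "(\<Sum>j\<in>{1..N}. if j \<le> z then u z else 0) = real z * u z" by simp
  qed
  finally show ?thesis by simp
qed

definition ee :: "real \<Rightarrow> nat \<Rightarrow> real" where "ee rho i = rho ^ i / fact i"

lemma erl_mean_sum: "(\<Sum>i\<le>s. real i * ee rho i) = rho * ((\<Sum>i\<le>s. ee rho i) - ee rho s)"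
proof (induction s)
  case 0 then show ?case by (simp add: ee_def)
next
  case (Suc s)
  have e: "real (Suc s) * ee rho (Suc s) = rho * ee rho s"
  proof -
    have "real (Suc s) * ee rho (Suc s) = real (Suc s) * (rho * rho ^ s / (real (Suc s) * fact s))"
      unfolding ee_def fact_Suc by simp
    also have "\<dots> = rho * rho ^ s / fact s"
      by (simp del: of_nat_Suc)
    finally show ?thesis unfolding ee_def by simp
  qed
  have "(\<Sum>i\<le>Suc s. real i * ee rho i) = (\<Sum>i\<le>s. real i * ee rho i) + real (Suc s) * ee rho (Suc s)"
    by (rule sum.atMost_Suc)
  also have "\<dots> = rho * ((\<Sum>i\<le>s. ee rho i) - ee rho s) + rho * ee rho s"
    by (simp only: Suc.IH e)
  also have "\<dots> = rho * ((\<Sum>i\<le>Suc s. ee rho i) - ee rho (Suc s))"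
    by (simp add: algebra_simps)
  finally show ?case .
qed




lemma prob_sum:
  assumes "finite S" "set_pmf q \<subseteq> S"
  shows "measure_pmf.prob q A = (\<Sum>x\<in>S. if x \<in> A then pmf q x else 0)"
proof -
  have "measure_pmf.prob q A = (\<integral>x. indicator A x \<partial>measure_pmf q)" by simp
  also have "\<dots> = (\<Sum>x\<in>S. indicator A x * pmf q x)"
    by (rule integral_measure_pmf_real) (use assms in auto)
  also have "\<dots> = (\<Sum>x\<in>S. if x \<in> A then pmf q x else 0)"
    by (rule sum.cong) (auto simp: indicator_def)
  finally show ?thesis .
qed

lemma exp_sum:
  assumes "finite S" "set_pmf q \<subseteq> S"
  shows "measure_pmf.expectation q f = (\<Sum>x\<in>S. f x * pmf q x)"
  by (rule integral_measure_pmf_real) (use assms in auto)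

lemma erl_pmf_ee:
  assumes "rho > 0"
  shows "pmf (erl_pmf s rho) i = (if i \<le> s then ee rho i / (\<Sum>j\<le>s. ee rho j) else 0)"
  unfolding erl_pmf_eq[OF assms] ee_def ..

lemma erl_set:
  assumes "rho > 0" "s \<le> N"
  shows "set_pmf (erl_pmf s rho) \<subseteq> {..N}"
  using assms by (auto simp: set_pmf_iff erl_pmf_ee split: if_splits)

lemma ee_pos: "rho > 0 \<Longrightarrow> ee rho i > 0"
  unfolding ee_def by simp

lemma EE_pos: "rho > 0 \<Longrightarrow> (\<Sum>j\<le>s. ee rho j) > 0"
  by (rule sum_pos2[where i=0]) (auto intro: less_imp_le ee_pos)

lemma erl_sum_N:
  assumes "rho > 0" "s \<le> N"
  shows "(\<Sum>z\<le>N. pmf (erl_pmf s rho) z) = 1"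
  using sum_pmf_eq_1[OF _ erl_set[OF assms]] by simp

lemma a_erl_b_erl:
  assumes "rho > 0"
  shows "a_erl s rho = rho * (1 - b_erl s rho)"
proof -
  let ?E = "(\<Sum>j\<le>s. ee rho j)"
  have "a_erl s rho = (\<Sum>z\<le>s. real z * pmf (erl_pmf s rho) z)"
    unfolding a_erl_def by (rule exp_sum) (use erl_set[OF assms, of s] in auto)
  also have "\<dots> = (\<Sum>z\<le>s. real z * ee rho z) / ?E"
    by (simp add: erl_pmf_ee[OF assms] sum_divide_distrib)
  also have "\<dots> = rho * (?E - ee rho s) / ?E" by (simp add: erl_mean_sum)
  also have "\<dots> = rho * (1 - ee rho s / ?E)"
    using EE_pos[OF assms, of s] by (simp add: field_simps)
  also have "ee rho s / ?E = b_erl s rho"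
    unfolding b_erl_def erl_pmf_ee[OF assms] by simp
  finally show ?thesis .
qed

lemma ee_Suc: "real (Suc z) * ee rho (Suc z) = rho * ee rho z"
proof -
  have "real (Suc z) * ee rho (Suc z) = real (Suc z) * (rho * rho ^ z / (real (Suc z) * fact z))"
    unfolding ee_def fact_Suc by simp
  also have "\<dots> = rho * rho ^ z / fact z"
    by (simp del: of_nat_Suc)
  finally show ?thesis unfolding ee_def by simp
qed




theorem theorem7:
  fixes m :: "'k::finite \<Rightarrow> nat" and n :: nat and lam mu :: "'k \<Rightarrow> real"
    and p :: "'k state pmf" and k :: 'k
  assumes "\<forall>l. lam l > 0" and "\<forall>l. mu l > 0"
    and "tl_stationary m n lam mu p"
  shows "st_le (map_pmf real (erl_pmf (m k) (lam k / mu k)))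
               (map_pmf (\<lambda>x. real (fst x k + snd x k)) p)
       \<and> st_le (map_pmf (\<lambda>x. real (fst x k + snd x k)) p)
               (map_pmf real (erl_pmf (m k + n) (lam k / mu k)))
       \<and> a_erl (m k) (lam k / mu k) \<le> measure_pmf.expectation p (\<lambda>x. real (fst x k + snd x k))
       \<and> measure_pmf.expectation p (\<lambda>x. real (fst x k + snd x k)) \<le> a_erl (m k + n) (lam k / mu k)
       \<and> mu k * a_erl (m k) (lam k / mu k)
           \<le> mu k * measure_pmf.expectation p (\<lambda>x. real (fst x k + snd x k))
       \<and> mu k * measure_pmf.expectation p (\<lambda>x. real (fst x k + snd x k))
           \<le> mu k * a_erl (m k + n) (lam k / mu k)
       \<and> b_erl (m k + n) (lam k / mu k) \<le> measure_pmf.prob p (tl_block m n k)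
       \<and> measure_pmf.prob p (tl_block m n k) \<le> b_erl (m k) (lam k / mu k)"
proof -
  let ?S = "tl_space m n"
  define N where "N = m k + n"
  define rho where "rho = lam k / mu k"
  have lk: "lam k > 0" and mk: "mu k > 0" using assms by auto
  have rho: "rho > 0" unfolding rho_def using lk mk by simp
  have fin: "finite ?S" by (rule finite_space)
  have supp: "set_pmf p \<subseteq> ?S" using assms(3) unfolding tl_stationary_def by auto
  define pi where "pi z = (\<Sum>x\<in>?S. if Zk k x = z then pmf p x else 0)" for z
  define e where "e = ee rho"
  define w where "w z = pi z / e z" for z
  have e_pos: "\<And>z. e z > 0" using ee_pos[OF rho] e_def by simp
  have pi_nn: "\<And>z. pi z \<ge> 0" unfolding pi_def by (intro sum_nonneg) auto
  have grp: "\<And>F. (\<Sum>x\<in>?S. pmf p x * F (Zk k x)) = (\<Sum>z\<le>N. F z * pi z)"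
    unfolding pi_def N_def by (rule group_Z)
  have pi_sum: "(\<Sum>z\<le>N. pi z) = 1"
    using grp[of "\<lambda>_. 1"] sum_pmf_eq_1[OF fin supp] by simp
  have cut1: "mu k * real (Suc z) * pi (Suc z) \<le> lam k * pi z" for z
  proof -
    have "lam k * (\<Sum>x\<in>?S. if accp m n k x \<and> Zk k x = z then pmf p x else 0) \<le> lam k * pi z"
      unfolding pi_def by (rule mult_left_mono[OF A_le]) (use lk in simp)
    then show ?thesis using cut_eq[OF assms(3), of k z] unfolding pi_def by simp
  qed
  have cut_le: "real (Suc z) * pi (Suc z) \<le> rho * pi z" for z
    using cut1[of z] mk unfolding rho_def by (simp add: field_simps)
  have cut_eq2: "real (Suc z) * pi (Suc z) = rho * pi z" if "z < m k" for z
  proof -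
    have "mu k * real (Suc z) * pi (Suc z) = lam k * pi z"
      using cut_eq[OF assms(3), of k z] A_eq[where m=m and k=k and zc=z and n=n and p=p, OF that] unfolding pi_def by simp
    then show ?thesis using mk unfolding rho_def by (simp add: field_simps)
  qed
  have eS: "e (Suc z) = rho * e z / real (Suc z)" for z
    using ee_Suc[of z rho] unfolding e_def by (simp add: field_simps del: of_nat_Suc)
  have wS: "w (Suc z) = real (Suc z) * pi (Suc z) / (rho * e z)" for z
    unfolding w_def eS by (simp add: field_simps)
  have w_dec: "w (Suc z) \<le> w z" for z
  proof -
    have "w (Suc z) \<le> rho * pi z / (rho * e z)"
      unfolding wS by (rule divide_right_mono[OF cut_le]) (use rho e_pos in \<open>simp add: less_imp_le\<close>)
    also have "\<dots> = w z" unfolding w_def using rho by simp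
    finally show ?thesis .
  qed
  have w_eqS: "w (Suc z) = w z" if "z < m k" for z
  proof -
    have "w (Suc z) = rho * pi z / (rho * e z)" by (simp only: wS cut_eq2[OF that])
    then show ?thesis unfolding w_def using rho by simp
  qed
  have w_mono: "w a \<le> w b" if "b \<le> a" for a b
    using decseqD[OF decseq_SucI[of w, OF w_dec] that] .
  have w_const: "a \<le> m k \<Longrightarrow> w a = w 0" for a
    by (induction a) (auto simp: w_eqS)
  have pi_w: "pi z = w z * e z" for z
    unfolding w_def using e_pos[of z] by simp
  have us: "pmf (erl_pmf s rho) z = (if z \<le> s then e z / (\<Sum>j\<le>s. e j) else 0)" for s z
    unfolding e_def by (rule erl_pmf_ee[OF rho])
  have EE: "(\<Sum>j\<le>s. e j) > 0" for s unfolding e_def by (rule EE_pos[OF rho])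
  have tailZ: "measure_pmf.prob (map_pmf (\<lambda>x. real (fst x k + snd x k)) p) {t<..}
      = (\<Sum>z\<le>N. if t < real z then pi z else 0)" for t
  proof -
    have "measure_pmf.prob (map_pmf (\<lambda>x. real (fst x k + snd x k)) p) {t<..}
        = (\<Sum>x\<in>?S. if x \<in> (\<lambda>x. real (fst x k + snd x k)) -` {t<..} then pmf p x else 0)"
      by (simp add: prob_sum[OF fin supp])
    also have "\<dots> = (\<Sum>x\<in>?S. pmf p x * (\<lambda>z. if t < real z then 1 else 0) (Zk k x))"
      by (rule sum.cong) (auto simp: Zk_def)
    also have "\<dots> = (\<Sum>z\<le>N. (\<lambda>z. if t < real z then 1 else 0) z * pi z)"
      by (rule grp)
    also have "\<dots> = (\<Sum>z\<le>N. if t < real z then pi z else 0)"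
      by (rule sum.cong) auto
    finally show ?thesis .
  qed
  have tailE: "measure_pmf.prob (map_pmf real (erl_pmf s rho)) {t<..}
      = (\<Sum>z\<le>N. if t < real z then pmf (erl_pmf s rho) z else 0)" if "s \<le> N" for s t
  proof -
    have "measure_pmf.prob (map_pmf real (erl_pmf s rho)) {t<..} = measure_pmf.prob (erl_pmf s rho) (real -` {t<..})"
      by (rule measure_map_pmf)
    also have "\<dots> = (\<Sum>z\<le>N. if z \<in> real -` {t<..} then pmf (erl_pmf s rho) z else 0)"
      by (rule prob_sum[OF _ erl_set[OF rho that]]) simp
    also have "\<dots> = (\<Sum>z\<le>N. if t < real z then pmf (erl_pmf s rho) z else 0)"
      by (rule sum.cong) auto
    finally show ?thesis .
  qed
  have upper: "(\<Sum>z\<le>N. if t < real z then pi z else 0)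
      \<le> (\<Sum>z\<le>N. if t < real z then pmf (erl_pmf N rho) z else 0)" for t
  proof (rule lr_tail[OF pi_sum erl_sum_N[OF rho order_refl]])
    fix a b assume ba: "b < a" and aN: "a \<le> N"
    have "pi a * pmf (erl_pmf N rho) b = w a * (e a * e b / (\<Sum>j\<le>N. e j))"
      using ba aN unfolding us pi_w by (simp add: mult.assoc)
    also have "\<dots> \<le> w b * (e a * e b / (\<Sum>j\<le>N. e j))"
      by (rule mult_right_mono[OF w_mono]) (use ba e_pos EE[of N] in \<open>auto intro: less_imp_le\<close>)
    also have "\<dots> = pi b * pmf (erl_pmf N rho) a"
      using ba aN unfolding us pi_w by (simp add: ac_simps)
    finally show "pi a * pmf (erl_pmf N rho) b \<le> pi b * pmf (erl_pmf N rho) a" .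
  qed
  have lower: "(\<Sum>z\<le>N. if t < real z then pmf (erl_pmf (m k) rho) z else 0)
      \<le> (\<Sum>z\<le>N. if t < real z then pi z else 0)" for t
  proof (rule lr_tail[OF erl_sum_N[OF rho] pi_sum])
    show "m k \<le> N" unfolding N_def by simp
    fix a b assume ba: "b < a" and aN: "a \<le> N"
    show "pmf (erl_pmf (m k) rho) a * pi b \<le> pmf (erl_pmf (m k) rho) b * pi a"
    proof (cases "a \<le> m k")
      case True
      then have "b \<le> m k" using ba by simp
      then show ?thesis using True unfolding us pi_w w_const[OF True] w_const[OF `b \<le> m k`] using ba by (simp add: ac_simps)
    next
      case False
      then show ?thesis using pi_nn[of a] unfolding us by (simp add: EE less_imp_le e_pos)
    qed
  qed
  have meanZ: "measure_pmf.expectation p (\<lambda>x. real (fst x k + snd x k)) = (\<Sum>z\<le>N. real z * pi z)"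
  proof -
    have "measure_pmf.expectation p (\<lambda>x. real (fst x k + snd x k)) = (\<Sum>x\<in>?S. real (fst x k + snd x k) * pmf p x)"
      by (rule exp_sum[OF fin supp])
    also have "\<dots> = (\<Sum>x\<in>?S. pmf p x * real (Zk k x))"
      by (simp add: Zk_def mult.commute)
    also have "\<dots> = (\<Sum>z\<le>N. real z * pi z)" by (rule grp)
    finally show ?thesis .
  qed
  have meanE: "a_erl s rho = (\<Sum>z\<le>N. real z * pmf (erl_pmf s rho) z)" if "s \<le> N" for s
    unfolding a_erl_def by (rule exp_sum[OF _ erl_set[OF rho that]]) simp
  have aU: "measure_pmf.expectation p (\<lambda>x. real (fst x k + snd x k)) \<le> a_erl N rho"
    unfolding meanZ meanE[OF order_refl] tail_sum[where N=N] by (intro sum_mono upper)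
  have mN: "m k \<le> N" unfolding N_def by simp
  have aL: "a_erl (m k) rho \<le> measure_pmf.expectation p (\<lambda>x. real (fst x k + snd x k))"
    unfolding meanZ meanE[OF mN] tail_sum[where N=N] by (intro sum_mono lower)
  define Pacc where "Pacc = (\<Sum>x\<in>?S. if accp m n k x then pmf p x else 0)"
  have blk: "measure_pmf.prob p (tl_block m n k) = 1 - Pacc"
  proof -
    have "measure_pmf.prob p (tl_block m n k) = (\<Sum>x\<in>?S. if x \<in> tl_block m n k then pmf p x else 0)"
      by (rule prob_sum[OF fin supp])
    also have "\<dots> = (\<Sum>x\<in>?S. if \<not> accp m n k x then pmf p x else 0)"
    proof (rule sum.cong[OF refl])
      fix x assume x: "x \<in> ?S"
      then have "fst x k \<le> m k" "(\<Sum>l\<in>UNIV. snd x l) \<le> n" unfolding tl_space_def by auto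
      then have "x \<in> tl_block m n k \<longleftrightarrow> \<not> accp m n k x"
        using x unfolding tl_block_def accp_def by auto
      then show "(if x \<in> tl_block m n k then pmf p x else 0) = (if \<not> accp m n k x then pmf p x else 0)"
        by simp
    qed
    also have "\<dots> = (\<Sum>x\<in>?S. pmf p x) - Pacc"
      unfolding Pacc_def sum_subtractf[symmetric] by (rule sum.cong) auto
    finally show ?thesis using sum_pmf_eq_1[OF fin supp] by simp
  qed
  have Pacc: "Pacc = measure_pmf.expectation p (\<lambda>x. real (fst x k + snd x k)) / rho"
  proof -
    have "lam k * Pacc = mu k * (\<Sum>x\<in>?S. pmf p x * real (Zk k x))"
      unfolding Pacc_def by (rule mean_eq[OF assms(3)])
    also have "(\<Sum>x\<in>?S. pmf p x * real (Zk k x)) = measure_pmf.expectation p (\<lambda>x. real (fst x k + snd x k))"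
      unfolding meanZ by (rule grp)
    finally show ?thesis unfolding rho_def using lk mk by (simp add: field_simps)
  qed
  have bE: "b_erl s rho = 1 - a_erl s rho / rho" for s
    using a_erl_b_erl[OF rho, of s] rho by (simp add: field_simps)
  have bU: "b_erl N rho \<le> measure_pmf.prob p (tl_block m n k)"
    unfolding blk Pacc bE using aU rho by (simp add: divide_right_mono)
  have bL: "measure_pmf.prob p (tl_block m n k) \<le> b_erl (m k) rho"
    unfolding blk Pacc bE using aL rho by (simp add: divide_right_mono)
  have stL: "st_le (map_pmf real (erl_pmf (m k) rho)) (map_pmf (\<lambda>x. real (fst x k + snd x k)) p)"
    unfolding st_le_def tailZ tailE[OF mN] using lower by blast
  have stU: "st_le (map_pmf (\<lambda>x. real (fst x k + snd x k)) p) (map_pmf real (erl_pmf N rho))"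
    unfolding st_le_def tailZ tailE[OF order_refl] using upper by blast
  show ?thesis
    unfolding rho_def[symmetric] N_def[symmetric]
    using stL stU aL aU bL bU mk by (auto intro: mult_left_mono)
qed


end
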